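(* Let $K$ be a finite subset of $\mathbb{R}^3$. Then $Extr(K^{cc})\subset K$.
   Context: A horizontal segment is one contained in a plane $\{z=c\}$; a vertical segment is one parallel to the $z$ axis. A $2+1$-complex is a closed subset of $\mathbb{R}^3$ that is the union of a finite list $L$ of elements, each of one of the following kinds: points; relatively open horizontal segments whose two endpoints belong to $L$; relatively open vertical segments whose two endpoints belong to $L$; relatively open triangles in a horizontal plane whose three boundary segments belong to $L$; relatively open rectangles in a vertical plane, two of whose sides are parallel to the $z$ axis, whose four boundary segments belong to $L$; open subsets of $\mathbb{R}^3$ whose boundary is a union of elements of the previous kinds, all belonging to $L$. For any $M\subset\mathbb{R}^3$, a point $p\in M$ is extremal if no relatively open horizontal or vertical segment contained in $M$ contains $p$; $Extr(M)$ is the set of extremal points of $M$. $K^{cc}=\bigcup\{L: L\text{ a } 2+1\text{-complex with } Extr(L)\subset K\}$. *)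

theory Defs
  imports "HOL-Analysis.Analysis"
begin

type_synonym pt = "real ^ 3"

text \<open>Coordinates: x = v$1, y = v$2, z = v$3.\<close>

definition e3 :: pt where "e3 = axis 3 1"

definition horiz_seg :: "pt \<Rightarrow> pt \<Rightarrow> bool" where
  "horiz_seg a b \<longleftrightarrow> a \<noteq> b \<and> a$3 = b$3"

definition vert_seg :: "pt \<Rightarrow> pt \<Rightarrow> bool" where
  "vert_seg a b \<longleftrightarrow> a \<noteq> b \<and> a$1 = b$1 \<and> a$2 = b$2"

definition low_elem :: "pt set set \<Rightarrow> pt set \<Rightarrow> bool" where
  "low_elem L E \<longleftrightarrow>
     (\<exists>p. E = {p}) \<or>
     (\<exists>a b. (horiz_seg a b \<or> vert_seg a b) \<and> E = open_segment a b \<and> {a} \<in> L \<and> {b} \<in> L) \<or>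
     (\<exists>a b c. \<not> collinear {a, b, c} \<and> a$3 = b$3 \<and> b$3 = c$3 \<and>
        E = rel_interior (convex hull {a, b, c}) \<and>
        open_segment a b \<in> L \<and> open_segment b c \<in> L \<and> open_segment a c \<in> L) \<or>
     (\<exists>a b h. horiz_seg a b \<and> h \<noteq> 0 \<and>
        E = rel_interior (convex hull {a, b, b + h *\<^sub>R e3, a + h *\<^sub>R e3}) \<and>
        open_segment a b \<in> L \<and> open_segment (a + h *\<^sub>R e3) (b + h *\<^sub>R e3) \<in> L \<and>
        open_segment a (a + h *\<^sub>R e3) \<in> L \<and> open_segment b (b + h *\<^sub>R e3) \<in> L)"

definition elem :: "pt set set \<Rightarrow> pt set \<Rightarrow> bool" where
  "elem L E \<longleftrightarrow> low_elem L E \<or>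
     (open E \<and> bounded E \<and> (\<exists>S \<subseteq> L. (\<forall>F\<in>S. low_elem L F) \<and> frontier E = \<Union>S))"

definition complex21 :: "pt set \<Rightarrow> bool" where
  "complex21 C \<longleftrightarrow> closed C \<and>
     (\<exists>L. finite L \<and> (\<forall>E\<in>L. elem L E) \<and> C = \<Union>L)"

definition extremal :: "pt set \<Rightarrow> pt \<Rightarrow> bool" where
  "extremal M p \<longleftrightarrow> p \<in> M \<and>
     \<not> (\<exists>a b. (horiz_seg a b \<or> vert_seg a b) \<and> open_segment a b \<subseteq> M \<and> p \<in> open_segment a b)"

definition Extr :: "pt set \<Rightarrow> pt set" where
  "Extr M = {p. extremal M p}"

definition cc_hull :: "pt set \<Rightarrow> pt set" where
  "cc_hull K = \<Union>{C. complex21 C \<and> Extr C \<subseteq> K}"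

end

theory Submission
  imports Defs
begin

theorem lemma2p7:
  fixes K :: "(real ^ 3) set"
  assumes "finite K"
  shows "Extr (cc_hull K) \<subseteq> K"
proof
  fix p assume "p \<in> Extr (cc_hull K)"
  hence ext: "extremal (cc_hull K) p" by (simp add: Extr_def)
  then obtain C where C: "complex21 C" "Extr C \<subseteq> K" "p \<in> C"
    by (auto simp: extremal_def cc_hull_def)
  have sub: "C \<subseteq> cc_hull K" using C by (auto simp: cc_hull_def)
  have "extremal C p" using ext C(3) sub unfolding extremal_def by blast
  thus "p \<in> K" using C(2) by (auto simp: Extr_def)
qed

end
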